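(* Let $(P,\leqslant)$ be a conditionally-complete interpolating poset and let $P^* := \{x \in P : \exists\, y \in P,\ y \ll x\}$. Let $D$ be a directed subset of $P$ bounded above, and assume there exists $y \in P^*$ with $y \leqslant \bigvee D$. Then $D \cap P^* \neq \emptyset$; consequently $D \cap P^*$ is directed and $\bigvee D = \bigvee (D \cap P^* )$.
   Context: A poset is conditionally-complete if every nonempty subset bounded above has a supremum. A nonempty subset $D$ is directed if any two elements of $D$ have an upper bound in $D$. For $x,y \in P$, $x \ll y$ ($x$ way-below $y$) means: for every directed subset $D$ of $P$ bounded above with supremum $d_0$, $y \leqslant d_0$ implies $x \leqslant d$ for some $d \in D$. $P$ is interpolating if whenever $x \ll y$ there is $z \in P$ with $x \ll z \ll y$. *)

theory Defs
  imports Main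
begin

text \<open>Posets are modelled as types of class order; P is the whole type.\<close>

definition bdd_above_set :: "'a::order set \<Rightarrow> bool" where
  "bdd_above_set S \<longleftrightarrow> (\<exists>u. \<forall>x\<in>S. x \<le> u)"

definition is_lub :: "'a::order set \<Rightarrow> 'a \<Rightarrow> bool" where
  "is_lub S s \<longleftrightarrow> (\<forall>x\<in>S. x \<le> s) \<and> (\<forall>u. (\<forall>x\<in>S. x \<le> u) \<longrightarrow> s \<le> u)"

definition lub :: "'a::order set \<Rightarrow> 'a" where
  "lub S = (THE s. is_lub S s)"

definition cond_complete :: "'a::order itself \<Rightarrow> bool" where
  "cond_complete _ \<longleftrightarrow> (\<forall>S::'a set. S \<noteq> {} \<and> bdd_above_set S \<longrightarrow> (\<exists>s. is_lub S s))"

definition directed :: "'a::order set \<Rightarrow> bool" where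
  "directed D \<longleftrightarrow> D \<noteq> {} \<and> (\<forall>x\<in>D. \<forall>y\<in>D. \<exists>z\<in>D. x \<le> z \<and> y \<le> z)"

definition way_below :: "'a::order \<Rightarrow> 'a \<Rightarrow> bool" (infix "\<lless>" 50) where
  "x \<lless> y \<longleftrightarrow> (\<forall>D d0. directed D \<and> is_lub D d0 \<and> y \<le> d0 \<longrightarrow> (\<exists>d\<in>D. x \<le> d))"

definition interpolating :: "'a::order itself \<Rightarrow> bool" where
  "interpolating _ \<longleftrightarrow> (\<forall>x y::'a. x \<lless> y \<longrightarrow> (\<exists>z. x \<lless> z \<and> z \<lless> y))"

definition Pstar :: "'a::order set" where
  "Pstar = {x. \<exists>y. y \<lless> x}"

end

theory Submission
  imports Defs
begin

lemma wb_mono: "x \<lless> y \<Longrightarrow> y \<le> y' \<Longrightarrow> x \<lless> y'"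
  unfolding way_below_def by (meson order_trans)

lemma Pstar_up: "a \<in> Pstar \<Longrightarrow> a \<le> c \<Longrightarrow> c \<in> Pstar"
  unfolding Pstar_def using wb_mono by blast

lemma lub_eq: "is_lub S s \<Longrightarrow> lub S = s"
  unfolding lub_def
  by (rule the_equality) (auto simp: is_lub_def intro: order.antisym)

theorem lemma2p3:
  fixes D :: "'a::order set"
  assumes "cond_complete TYPE('a)"
    and "interpolating TYPE('a)"
    and "directed D"
    and "bdd_above_set D"
    and "\<exists>y\<in>Pstar. y \<le> lub D"
  shows "D \<inter> Pstar \<noteq> {} \<and> directed (D \<inter> Pstar) \<and> lub D = lub (D \<inter> Pstar)"
proof -
  have ne: "D \<noteq> {}" using assms(3) by (simp add: directed_def)
  obtain s where s: "is_lub D s" using assms(1,4) ne unfolding cond_complete_def by blast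
  have ls: "lub D = s" using lub_eq[OF s] .
  obtain y where y: "y \<in> Pstar" "y \<le> s" using assms(5) ls by auto
  obtain w where w: "w \<lless> y" using y unfolding Pstar_def by auto
  obtain z where z: "w \<lless> z" "z \<lless> y" using assms(2) w unfolding interpolating_def by blast
  obtain d where d: "d \<in> D" "z \<le> d" using z(2) assms(3) s y(2) unfolding way_below_def by blast
  have dP: "d \<in> Pstar" using z(1) d(2) wb_mono unfolding Pstar_def by blast
  have cof: "\<forall>x\<in>D. \<exists>c\<in>D \<inter> Pstar. x \<le> c"
  proof
    fix x assume "x \<in> D"
    then obtain c where "c \<in> D" "x \<le> c" "d \<le> c" using assms(3) d(1) unfolding directed_def by blast
    then show "\<exists>c\<in>D \<inter> Pstar. x \<le> c" using Pstar_up[OF dP] by blast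
  qed
  have dir: "directed (D \<inter> Pstar)"
    unfolding directed_def
  proof (intro conjI ballI)
    show "D \<inter> Pstar \<noteq> {}" using d dP by blast
  next
    fix a b assume "a \<in> D \<inter> Pstar" "b \<in> D \<inter> Pstar"
    then obtain c where "c \<in> D" "a \<le> c" "b \<le> c" using assms(3) unfolding directed_def by blast
    then show "\<exists>c\<in>D \<inter> Pstar. a \<le> c \<and> b \<le> c" using Pstar_up \<open>a \<in> D \<inter> Pstar\<close> by blast
  qed
  have "is_lub (D \<inter> Pstar) s"
    using s cof unfolding is_lub_def by (meson IntD1 order_trans)
  then have "lub (D \<inter> Pstar) = s" by (rule lub_eq)
  then show ?thesis using dir ls d dP by (auto simp: directed_def)
qed

end
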